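(* Assume the standing setup below. For every $k\in\omega$ there is a $k$-enveloping embedding $\varphi:\mathbf H\to\mathbf G$.
   Context: Standing setup: $L$ is a relational language with no unary relations and with $n_i<\omega$ relations of arity $i$, named $R_{i,j}$ ($1\le j\le n_i$); $\mathbf H$ is a countable $L$-hypergraph with vertex set $\omega$, universal for all countable $L$-hypergraphs (an $L$-hypergraph: all relations injective and symmetric, each set of vertices in at most one relation; embeddings are monotone w.r.t. the enumerations). Let $\mu$ be the largest integer with $n_\mu>0$ (or $\omega$ if none). The signature $\sigma=(\sigma_1,\sigma_2,\dots)$ is $\sigma_i=n_{i+1}+2$ if $i<\mu$ and $\sigma_i=1$ otherwise; $\sigma^{(i)}_j=\sigma_{j+i}$. $I^n_\ell$ denotes the set of tuples $(i_0,\dots,i_{\ell-1})$ with $n>i_0>\dots>i_{\ell-1}\ge0$ and $I^n_{<\omega}=\bigcup_{\ell\ge1}I^n_\ell$; a $\sigma$-valuation function of level $n$ is $f:I^n_{<\omega}\to\omega$ with $f(\bar x)<\sigma_\ell$ for $\bar x\in I^n_\ell$, $|f|=n$. $\mathbf T=(T_0,T_1,\dots)$ with $T_i$ the tree of $\sigma^{(i)}$-valuation functions of finite level ordered by inclusion. $\mathbf G$ is the $L$-hypergraph with vertex set $T_0$ in which, for $x_0,\dots,x_{i-1}\in T_0$ with $|x_0|>\dots>|x_{i-1}|$ ($i\ge2$), $\{x_0,\dots,x_{i-1}\}\in R_{i,j}^{\mathbf G}$ iff $x_0(|x_1|,\dots,|x_{i-1}|)=j$ (and no other sets are related), enumerated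 by: $f\le g$ iff $|f|<|g|$, or $|f|=|g|$ and $f(\bar x)<g(\bar x)$ at the lexicographically smallest $\bar x$ where they differ. Slices: for a valuation function $f$ of level $n$ and $\bar x=(x_0,\dots,x_{m-1})$ with $n>x_0>\dots>x_{m-1}\ge0$, the $\bar x$-slice $f^{\bar x}$ is the valuation function of level $x_{m-1}$ given by $f^{\bar x}(\bar y)=f(\bar x^\frown\bar y)$; an $m$-slice is an $\bar x$-slice with $|\bar x|=m$ (the $0$-slice is $f$; $m$-slices of elements of $T_0$ are elements of $T_m$). $k$-enveloping: an embedding $\varphi:\mathbf H\to\mathbf G$ with range $R$ is $k$-enveloping if there is a partition $\omega=O\cup B$, $O\cap B=\emptyset$, such that for every $f\in R$, every $m<k$ and every $\bar x=(x_0,\dots,x_{m-1})$ for which $f^{\bar x}$ is defined: (1) if $f^{\bar x}$ is not constant zero then $x_i\in O$ for all $i$; (2) if $g\in R$ or $g$ is a constant zero valuation function, $g'$ is an $m$-slice of $g$, and $f^{\bar x}$ and $g'$ are incomparable in $T_m$, then $|f^{\bar x}\wedge g'|\in B$. *)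

theory Defs
  imports Main
begin

text \<open>The language is given by nrel :: nat => nat, nrel i = number of relations of arity i.
An L-hypergraph on vertex set V is encoded by a map E from vertex sets to labels:
E S = Some j means S (a set of i = card S vertices) belongs to R_{i,j}; None means S is
in no relation.  Injectivity and symmetry of the relations are built into this encoding.\<close>

definition is_Lhyp :: "(nat \<Rightarrow> nat) \<Rightarrow> 'a set \<Rightarrow> ('a set \<Rightarrow> nat option) \<Rightarrow> bool" where
  "is_Lhyp nrel V E \<longleftrightarrow>
     (\<forall>S. E S \<noteq> None \<longrightarrow>
        S \<subseteq> V \<and> finite S \<and> 2 \<le> card S \<and> 1 \<le> the (E S) \<and> the (E S) \<le> nrel (card S))"

text \<open>H (vertex set omega) is universal: every countable L-hypergraph (vertex set a subset of
omega, enumerated increasingly) embeds into H by an embedding monotone w.r.t. the enumerations.\<close>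

definition universal_Lhyp :: "(nat \<Rightarrow> nat) \<Rightarrow> (nat set \<Rightarrow> nat option) \<Rightarrow> bool" where
  "universal_Lhyp nrel H \<longleftrightarrow> is_Lhyp nrel (UNIV :: nat set) H \<and>
     (\<forall>(V :: nat set) E. is_Lhyp nrel V E \<longrightarrow>
        (\<exists>h. strict_mono_on V h \<and> (\<forall>S \<subseteq> V. H (h ` S) = E S)))"

text \<open>mu = largest i with nrel i > 0, or omega if there is no such largest integer.
sigma i (for i >= 1) = nrel (i+1) + 2 if i < mu, and 1 otherwise.\<close>

definition sig :: "(nat \<Rightarrow> nat) \<Rightarrow> nat \<Rightarrow> nat" where
  "sig nrel i =
     (let P = {j. 0 < nrel j} in
      if P \<noteq> {} \<and> finite P \<and> Max P \<le> i then 1 else nrel (i + 1) + 2)"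

definition dec_tuples :: "nat \<Rightarrow> nat list set" where
  "dec_tuples n = {xs. xs \<noteq> [] \<and> sorted_wrt (>) xs \<and> (\<forall>x\<in>set xs. x < n)}"

text \<open>A valuation function is represented as a pair (level, values), the values being 0 outside
the domain I^n_{<omega}, so that pair equality is equality of partial functions.\<close>

type_synonym vf = "nat \<times> (nat list \<Rightarrow> nat)"

definition valfun :: "(nat \<Rightarrow> nat) \<Rightarrow> vf \<Rightarrow> bool" where
  "valfun s v \<longleftrightarrow>
     (\<forall>xs \<in> dec_tuples (fst v). snd v xs < s (length xs)) \<and>
     (\<forall>xs. xs \<notin> dec_tuples (fst v) \<longrightarrow> snd v xs = 0)"

definition Tlev :: "(nat \<Rightarrow> nat) \<Rightarrow> nat \<Rightarrow> vf set" where
  "Tlev nrel i = {v. valfun (\<lambda>j. sig nrel (j + i)) v}"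

definition restr :: "vf \<Rightarrow> nat \<Rightarrow> vf" where
  "restr v l = (l, \<lambda>xs. if xs \<in> dec_tuples l then snd v xs else 0)"

definition vf_le :: "vf \<Rightarrow> vf \<Rightarrow> bool" where
  "vf_le a b \<longleftrightarrow> fst a \<le> fst b \<and> restr b (fst a) = a"

definition meet_level :: "vf \<Rightarrow> vf \<Rightarrow> nat" where
  "meet_level a b = (GREATEST l. l \<le> fst a \<and> l \<le> fst b \<and> restr a l = restr b l)"

definition const_zero :: "vf \<Rightarrow> bool" where
  "const_zero v \<longleftrightarrow> (\<forall>xs. snd v xs = 0)"

definition Grel :: "(nat \<Rightarrow> nat) \<Rightarrow> vf set \<Rightarrow> nat option" where
  "Grel nrel S =
     (if S \<subseteq> Tlev nrel 0 \<and> finite S \<and> 2 \<le> card S \<and> inj_on fst S then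
        (let x0 = (THE x. x \<in> S \<and> fst x = Max (fst ` S));
             tup = rev (sorted_list_of_set (fst ` (S - {x0})));
             j = snd x0 tup
         in if 1 \<le> j \<and> j \<le> nrel (card S) then Some j else None)
      else None)"

definition enum_less :: "vf \<Rightarrow> vf \<Rightarrow> bool" where
  "enum_less f g \<longleftrightarrow> fst f < fst g \<or>
     (fst f = fst g \<and> (\<exists>xs. snd f xs < snd g xs \<and>
        (\<forall>ys. (ys, xs) \<in> lexord {(a, b). a < (b::nat)} \<longrightarrow> snd f ys = snd g ys)))"

definition is_embedding :: "(nat \<Rightarrow> nat) \<Rightarrow> (nat set \<Rightarrow> nat option) \<Rightarrow> (nat \<Rightarrow> vf) \<Rightarrow> bool" where
  "is_embedding nrel H \<phi> \<longleftrightarrow>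
     (\<forall>a. \<phi> a \<in> Tlev nrel 0) \<and>
     (\<forall>a b. a < b \<longrightarrow> enum_less (\<phi> a) (\<phi> b)) \<and>
     (\<forall>S. Grel nrel (\<phi> ` S) = H S)"

definition slice_ok :: "vf \<Rightarrow> nat list \<Rightarrow> bool" where
  "slice_ok f xs \<longleftrightarrow> sorted_wrt (>) xs \<and> (\<forall>x\<in>set xs. x < fst f)"

definition slice :: "vf \<Rightarrow> nat list \<Rightarrow> vf" where
  "slice f xs = (if xs = [] then f
     else (last xs, \<lambda>ys. if ys \<in> dec_tuples (last xs) then snd f (xs @ ys) else 0))"

definition k_enveloping ::
  "(nat \<Rightarrow> nat) \<Rightarrow> (nat set \<Rightarrow> nat option) \<Rightarrow> nat \<Rightarrow> (nat \<Rightarrow> vf) \<Rightarrow> bool" where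
  "k_enveloping nrel H k \<phi> \<longleftrightarrow> is_embedding nrel H \<phi> \<and>
     (\<exists>Os Bs :: nat set. Os \<union> Bs = UNIV \<and> Os \<inter> Bs = {} \<and>
       (\<forall>f \<in> range \<phi>. \<forall>m < k. \<forall>xs. length xs = m \<and> slice_ok f xs \<longrightarrow>
          (\<not> const_zero (slice f xs) \<longrightarrow> set xs \<subseteq> Os) \<and>
          (\<forall>g ys. (g \<in> range \<phi> \<or> (g \<in> Tlev nrel 0 \<and> const_zero g)) \<longrightarrow>
                  length ys = m \<longrightarrow> slice_ok g ys \<longrightarrow>
                  \<not> vf_le (slice f xs) (slice g ys) \<longrightarrow> \<not> vf_le (slice g ys) (slice f xs) \<longrightarrow>
                  meet_level (slice f xs) (slice g ys) \<in> Bs)))"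

end

theory Submission
  imports Defs "HOL-Library.Nat_Bijection"
begin

locale cons =
  fixes nrel :: "nat \<Rightarrow> nat" and H :: "nat set \<Rightarrow> nat option" and k :: nat
  assumes HL: "is_Lhyp nrel UNIV H"
begin

definition N :: "nat \<Rightarrow> nat" where "N c = Max (nrel ` {..k+c+1})"
definition code :: "nat \<Rightarrow> nat set \<Rightarrow> nat \<Rightarrow> nat" where
  "code c A j = prod_encode (c, prod_encode (set_encode A, j))"
definition Bd :: "nat \<Rightarrow> nat" where
  "Bd c = Max ((\<lambda>(A,j). code c A j) ` (Pow {..<c} \<times> {..N c}))"
definition L :: "nat \<Rightarrow> nat" where "L c = (\<Sum>i\<le>c. Suc (Bd i))"
definition lv :: "nat \<Rightarrow> nat" where "lv c = 2 * L c"
definition pos :: "nat \<Rightarrow> nat set \<Rightarrow> nat \<Rightarrow> nat" where "pos c A j = 2 * code c A j + 1"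
definition pc :: "nat \<Rightarrow> nat" where "pc b = fst (prod_decode (b div 2))"
definition pA :: "nat \<Rightarrow> nat set" where
  "pA b = set_decode (fst (prod_decode (snd (prod_decode (b div 2)))))"
definition pj :: "nat \<Rightarrow> nat" where
  "pj b = snd (prod_decode (snd (prod_decode (b div 2))))"
definition Vs :: "nat list \<Rightarrow> nat set" where "Vs t = {v. lv v \<in> set t}"

lemma decode_pos[simp]:
  assumes "finite A"
  shows "pc (pos c A j) = c" "pA (pos c A j) = A" "pj (pos c A j) = j"
  using assms by (simp_all add: pc_def pA_def pj_def pos_def code_def)

lemma odd_pos[simp]: "odd (pos c A j)" by (simp add: pos_def)
lemma even_lv[simp]: "even (lv c)" by (simp add: lv_def)
lemma pos_notin_lv[simp]: "pos c A j \<notin> range lv"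
  using odd_pos even_lv by (metis image_iff)

lemma L_mono: "strict_mono L"
  unfolding strict_mono_def
proof (intro allI impI)
  fix x y :: nat assume "x < y"
  then show "L x < L y"
  proof (induction y)
    case 0 then show ?case by simp
  next
    case (Suc y)
    have "L y < L (Suc y)" by (simp add: L_def)
    then show ?case using Suc by (cases "x = y") auto
  qed
qed

lemma lv_mono: "strict_mono lv"
  using L_mono unfolding strict_mono_def lv_def by simp

lemma lv_less[simp]: "lv a < lv b \<longleftrightarrow> a < b"
  using lv_mono strict_mono_less by blast
lemma lv_le[simp]: "lv a \<le> lv b \<longleftrightarrow> a \<le> b"
  using lv_mono strict_mono_less_eq by blast
lemma lv_eq[simp]: "lv a = lv b \<longleftrightarrow> a = b"
  using lv_mono strict_mono_eq by blast
lemma inj_lv: "inj lv" by (simp add: inj_def)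

lemma N_ge: "s \<le> k + c + 1 \<Longrightarrow> nrel s \<le> N c"
  unfolding N_def by (intro Max_ge) auto

lemma pos_bound:
  assumes "A \<subseteq> {..<c}" "j \<le> N c"
  shows "pos c A j < lv c"
proof -
  have "code c A j \<le> Bd c"
    unfolding Bd_def using assms by (intro Max_ge) (auto intro!: image_eqI[where x="(A,j)"])
  moreover have "Suc (Bd c) \<le> L c"
    unfolding L_def by (rule member_le_sum) auto
  ultimately show ?thesis unfolding pos_def lv_def by simp
qed

lemma finite_Vs[simp]: "finite (Vs t)"
proof -
  have "Vs t = lv -` set t" unfolding Vs_def by auto
  then show ?thesis by (simp add: finite_vimageI inj_lv)
qed

lemma card_Vs: "card (Vs t) \<le> length t"
proof -
  have "lv ` Vs t \<subseteq> set t" unfolding Vs_def by auto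
  then have "card (lv ` Vs t) \<le> card (set t)" by (intro card_mono) auto
  also have "\<dots> \<le> length t" by (rule card_length)
  finally show ?thesis using card_image[OF inj_on_subset[OF inj_lv]] by simp
qed

lemma Vs_append[simp]: "Vs (xs @ ys) = Vs xs \<union> Vs ys" by (auto simp: Vs_def)
lemma Vs_Cons: "Vs (x # ys) = Vs [x] \<union> Vs ys" by (auto simp: Vs_def)
lemma Vs_lv_Cons[simp]: "Vs (lv c # ys) = insert c (Vs ys)" by (auto simp: Vs_def)
lemma Vs_lv[simp]: "Vs [lv c] = {c}" by (auto simp: Vs_def)
lemma Vs_nil[simp]: "Vs [] = {}" by (auto simp: Vs_def)

lemma HS: "H S = Some j \<Longrightarrow> finite S \<and> 2 \<le> card S \<and> 1 \<le> j \<and> j \<le> nrel (card S)"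
  using HL unfolding is_Lhyp_def by force

lemma sig_big: "0 < nrel s \<Longrightarrow> r < s \<Longrightarrow> sig nrel r = nrel (r+1) + 2"
proof -
  assume a: "0 < nrel s" "r < s"
  let ?P = "{j. 0 < nrel j}"
  have "\<not> (?P \<noteq> {} \<and> finite ?P \<and> Max ?P \<le> r)"
  proof
    assume "?P \<noteq> {} \<and> finite ?P \<and> Max ?P \<le> r"
    moreover have "s \<in> ?P" using a by simp
    ultimately have "s \<le> Max ?P" by auto
    then show False using a \<open>?P \<noteq> {} \<and> finite ?P \<and> Max ?P \<le> r\<close> by linarith
  qed
  then show ?thesis unfolding sig_def Let_def by auto
qed

lemma sig_pos: "0 < sig nrel r" unfolding sig_def Let_def by auto

lemma sorted_distinct: "sorted_wrt (>) (t::nat list) \<Longrightarrow> distinct t"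
  by (induction t) auto

lemma card_Vs_eq: "set t \<subseteq> range lv \<Longrightarrow> distinct t \<Longrightarrow> card (Vs t) = length t"
proof -
  assume a: "set t \<subseteq> range lv" "distinct t"
  have "lv ` Vs t = set t" using a(1) unfolding Vs_def by auto
  then have "card (lv ` Vs t) = length t" using a(2) distinct_card by metis
  then show ?thesis using card_image[OF inj_on_subset[OF inj_lv]] by simp
qed

definition KPc :: "nat \<Rightarrow> nat list \<Rightarrow> bool" where
  "KPc a t \<longleftrightarrow> t \<noteq> [] \<and> set (butlast t) \<subseteq> range lv \<and> odd (last t) \<and> length t \<le> k \<and>
     pA (last t) \<subseteq> {..<pc (last t)} \<and> (\<forall>v \<in> insert a (Vs (butlast t)). pc (last t) < v)"

definition KPset :: "nat \<Rightarrow> nat list \<Rightarrow> nat set" where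
  "KPset a t = insert a (Vs (butlast t)) \<union> insert (pc (last t)) (pA (last t))"

definition val :: "nat \<Rightarrow> nat list \<Rightarrow> nat" where
  "val a t = (if t \<in> dec_tuples (lv a) then
     (if set t \<subseteq> range lv then (case H (insert a (Vs t)) of Some j \<Rightarrow> j | None \<Rightarrow> 0)
      else if KPc a t \<and> H (KPset a t) = Some (pj (last t)) then 1 else 0) else 0)"

definition phi :: "nat \<Rightarrow> vf" where "phi a = (lv a, val a)"

lemma Vs_lt: "t \<in> dec_tuples (lv a) \<Longrightarrow> v \<in> Vs t \<Longrightarrow> v < a"
  unfolding dec_tuples_def Vs_def using lv_less by blast

lemma valfun_phi: "phi a \<in> Tlev nrel 0"
  unfolding Tlev_def valfun_def
proof (intro CollectI conjI ballI allI impI)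
  fix t assume "t \<notin> dec_tuples (fst (phi a))"
  then show "snd (phi a) t = 0" by (simp add: phi_def val_def)
next
  fix t assume tD: "t \<in> dec_tuples (fst (phi a))"
  then have tD': "t \<in> dec_tuples (lv a)" by (simp add: phi_def)
  then have dist: "distinct t" and ne: "t \<noteq> []"
    using sorted_distinct unfolding dec_tuples_def by auto
  show "snd (phi a) t < sig nrel (length t + 0)"
  proof (cases "set t \<subseteq> range lv")
    case True
    have aV: "a \<notin> Vs t" using Vs_lt[OF tD'] by blast
    have cS: "card (insert a (Vs t)) = length t + 1"
      using aV card_Vs_eq[OF True dist] by simp
    show ?thesis
    proof (cases "H (insert a (Vs t))")
      case None then show ?thesis using tD' True sig_pos by (simp add: phi_def val_def)
    next
      case (Some j)
      from HS[OF Some] cS have "1 \<le> j" "j \<le> nrel (length t + 1)" by auto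
      then have "sig nrel (length t) = nrel (length t + 1) + 2" by (intro sig_big) auto
      then show ?thesis using tD' True Some \<open>j \<le> _\<close> by (simp add: phi_def val_def)
    qed
  next
    case False
    show ?thesis
    proof (cases "KPc a t \<and> H (KPset a t) = Some (pj (last t))")
      case False2: False
      then show ?thesis using tD' False sig_pos[of "length t"] by (auto simp: phi_def val_def)
    next
      case True
      then have K: "KPc a t" and Hs: "H (KPset a t) = Some (pj (last t))" by auto
      let ?b = "butlast t"
      have bR: "set ?b \<subseteq> range lv" using K by (simp add: KPc_def)
      have bD: "distinct ?b" using dist by (simp add: distinct_butlast)
      have aV: "a \<notin> Vs ?b" using Vs_lt[OF tD'] by (auto simp: Vs_def dest: in_set_butlastD)
      have pcn: "pc (last t) \<notin> insert a (Vs ?b)" using K by (auto simp: KPc_def)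
      have "card (insert (pc (last t)) (insert a (Vs ?b))) = length ?b + 2"
        using aV pcn card_Vs_eq[OF bR bD] by simp
      also have "length ?b + 2 = length t + 1" using ne by simp
      finally have c1: "card (insert (pc (last t)) (insert a (Vs ?b))) = length t + 1" .
      have fin: "finite (KPset a t)" using HS[OF Hs] by simp
      have "insert (pc (last t)) (insert a (Vs ?b)) \<subseteq> KPset a t" by (auto simp: KPset_def)
      then have "length t + 1 \<le> card (KPset a t)" using c1 card_mono[OF fin] by metis
      moreover have "1 \<le> nrel (card (KPset a t))" using HS[OF Hs] by auto
      ultimately have "sig nrel (length t) = nrel (length t + 1) + 2" by (intro sig_big[of "card (KPset a t)"]) auto
      then show ?thesis using tD' False True by (simp add: phi_def val_def)
    qed
  qed
qed

lemma fst_phi[simp]: "fst (phi a) = lv a" by (simp add: phi_def)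
lemma snd_phi[simp]: "snd (phi a) = val a" by (simp add: phi_def)
lemma inj_phi: "inj phi" unfolding inj_def phi_def by auto
lemma inj_on_phi[simp]: "inj_on phi X" by (rule inj_on_subset[OF inj_phi]) simp
lemma card_phi[simp]: "card (phi ` X) = card X" by (rule card_image) simp

lemma Grel_phi: "Grel nrel (phi ` S) = H S"
proof (cases "finite S \<and> 2 \<le> card S")
  case False
  have "H S = None" using False HS by (cases "H S") auto
  moreover have "\<not> (finite (phi ` S) \<and> 2 \<le> card (phi ` S))"
    using False inj_phi by (simp add: card_image finite_image_iff inj_on_subset[OF inj_phi])
  ultimately show ?thesis unfolding Grel_def by auto
next
  case True
  then have fin: "finite S" and c2: "2 \<le> card S" by auto
  have ne: "S \<noteq> {}" using c2 by auto
  define a where "a = Max S"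
  have aS: "a \<in> S" using fin ne a_def by simp
  have cond: "phi ` S \<subseteq> Tlev nrel 0 \<and> finite (phi ` S) \<and> 2 \<le> card (phi ` S) \<and> inj_on fst (phi ` S)"
    using valfun_phi fin c2 by (auto simp:  inj_on_def)
  have fS: "fst ` phi ` S = lv ` S" by (auto simp: image_image)
  have mx: "Max (fst ` phi ` S) = lv a"
    unfolding fS a_def using fin ne by (simp add: mono_Max_commute strict_mono_mono[OF lv_mono])
  have x0: "(THE x. x \<in> phi ` S \<and> fst x = Max (fst ` phi ` S)) = phi a"
    unfolding mx by (rule the_equality) (auto simp: aS)
  have f2: "fst ` (phi ` S - {phi a}) = lv ` (S - {a})"
  proof -
    have "phi ` S - {phi a} = phi ` (S - {a})" by (simp add: image_set_diff[OF inj_phi])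
    then show ?thesis by (simp add: image_image)
  qed
  define tup where "tup = rev (sorted_list_of_set (lv ` (S - {a})))"
  have st: "set tup = lv ` (S - {a})" using fin by (simp add: tup_def)
  have ne2: "S - {a} \<noteq> {}"
  proof
    assume "S - {a} = {}"
    then have "S \<subseteq> {a}" by auto
    then have "card S \<le> 1" using card_mono[of "{a}" S] by simp
    then show False using c2 by simp
  qed
  have tD: "tup \<in> dec_tuples (lv a)"
    unfolding dec_tuples_def
  proof (intro CollectI conjI ballI)
    show "tup \<noteq> []" using st ne2 by auto
    show "sorted_wrt (>) tup" by (simp add: tup_def sorted_wrt_rev)
    fix x assume "x \<in> set tup"
    then obtain v where "v \<in> S" "v \<noteq> a" "x = lv v" using st by auto
    then show "x < lv a" using fin a_def by (simp add: le_neq_implies_less)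
  qed
  have sR: "set tup \<subseteq> range lv" using st by auto
  have VS: "insert a (Vs tup) = S" using st aS by (auto simp: Vs_def)
  have v: "val a tup = (case H S of Some j \<Rightarrow> j | None \<Rightarrow> 0)"
    using tD sR VS by (simp add: val_def)
  have G: "Grel nrel (phi ` S) = (if 1 \<le> snd (phi a) tup \<and> snd (phi a) tup \<le> nrel (card (phi ` S))
      then Some (snd (phi a) tup) else None)"
    unfolding Grel_def Let_def by (simp only: if_P[OF cond] x0 f2 tup_def[symmetric])
  show ?thesis
  proof (cases "H S")
    case (Some j)
    have vj: "val a tup = j" using v Some by simp
    have "1 \<le> j \<and> j \<le> nrel (card S)" using HS[OF Some] by simp
    then show ?thesis using G unfolding vj snd_phi card_phi Some by simp
  next
    case None
    have vj: "val a tup = 0" using v None by simp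
    show ?thesis using G unfolding vj snd_phi None by simp
  qed
qed

lemma emb: "is_embedding nrel H phi"
  unfolding is_embedding_def
proof (intro conjI allI impI)
  fix a b :: nat assume "a < b"
  then show "enum_less (phi a) (phi b)" unfolding enum_less_def by simp
qed (simp_all add: valfun_phi Grel_phi)

lemma last_le: "xs \<noteq> [] \<Longrightarrow> sorted_wrt (>) (xs::nat list) \<Longrightarrow> x \<in> set xs \<Longrightarrow> last xs \<le> x"
proof (induction xs)
  case (Cons y ys)
  then show ?case by (cases "ys = []") (auto intro: less_imp_le)
qed simp

lemma fst_slice: "fst (slice f xs) = (if xs = [] then fst f else last xs)"
  by (simp add: slice_def)

lemma dec_app:
  assumes "slice_ok f xs" "t \<in> dec_tuples (fst (slice f xs))"
  shows "xs @ t \<in> dec_tuples (fst f)"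
proof (cases "xs = []")
  case True then show ?thesis using assms by (simp add: slice_def)
next
  case False
  have s: "sorted_wrt (>) xs" "\<forall>x\<in>set xs. x < fst f" using assms(1) by (auto simp: slice_ok_def)
  have t: "t \<noteq> []" "sorted_wrt (>) t" "\<forall>y\<in>set t. y < last xs"
    using assms(2) False by (auto simp: dec_tuples_def fst_slice)
  have "last xs < fst f" using s False by simp
  have "\<forall>x\<in>set xs. \<forall>y\<in>set t. y < x" using t(3) last_le[OF False s(1)] by (meson less_le_trans)
  then show ?thesis unfolding dec_tuples_def using s t \<open>last xs < fst f\<close>
    by (auto simp: sorted_wrt_append)
qed

lemma snd_slice:
  assumes "t \<in> dec_tuples (fst (slice f xs))"
  shows "snd (slice f xs) t = snd f (xs @ t)"
  using assms by (cases "xs = []") (auto simp: slice_def)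

lemma below:
  assumes "slice_ok (phi a) xs" "lv c < fst (slice (phi a) xs)"
  shows "c < a" "\<forall>v \<in> Vs xs. c < v"
proof -
  have s: "sorted_wrt (>) xs" "\<forall>x\<in>set xs. x < lv a" using assms(1) by (auto simp: slice_ok_def)
  show "c < a"
  proof (cases "xs = []")
    case True then show ?thesis using assms(2) by (simp add: fst_slice)
  next
    case False
    then have "last xs < lv a" using s by simp
    moreover have "lv c < last xs" using assms(2) False by (simp add: fst_slice)
    ultimately have "lv c < lv a" by linarith
    then show ?thesis by simp
  qed
  show "\<forall>v \<in> Vs xs. c < v"
  proof
    fix v assume "v \<in> Vs xs"
    then have v: "lv v \<in> set xs" by (simp add: Vs_def)
    then have "xs \<noteq> []" by auto
    then have "lv c < last xs" "last xs \<le> lv v" using assms(2) last_le[OF _ s(1) v] by (simp_all add: fst_slice)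
    then have "lv c < lv v" by linarith
    then show "c < v" by simp
  qed
qed

lemma card_bound:
  assumes "length xs < k" "A \<subseteq> {..<c}"
  shows "card (insert a (Vs xs) \<union> insert c A) \<le> k + c + 1"
proof -
  have fA: "finite A" using assms(2) finite_subset by blast
  have "card (insert a (Vs xs) \<union> insert c A) \<le> card (insert a (Vs xs)) + card (insert c A)"
    by (rule card_Un_le)
  also have "\<dots> \<le> Suc (card (Vs xs)) + Suc (card A)"
    by (intro add_mono card_insert_le_m1) (auto simp: card_insert_if fA)
  also have "card A \<le> c" using card_mono[OF _ assms(2)] by simp
  then have "Suc (card (Vs xs)) + Suc (card A) \<le> Suc (length xs) + Suc c" using card_Vs[of xs] by simp
  finally show ?thesis using assms(1) by simp
qed

lemma j_bound:
  assumes "H (insert a (Vs xs) \<union> insert c A) = Some j" "length xs < k" "A \<subseteq> {..<c}"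
  shows "pos c A j < lv c"
proof -
  have "j \<le> nrel (card (insert a (Vs xs) \<union> insert c A))" using HS[OF assms(1)] by simp
  also have "\<dots> \<le> N c" by (rule N_ge[OF card_bound[OF assms(2,3)]])
  finally show ?thesis by (rule pos_bound[OF assms(3)])
qed

lemma bit:
  assumes ok: "slice_ok (phi a) xs" and R: "set xs \<subseteq> range lv" and len: "length xs < k"
    and lc: "lv c < fst (slice (phi a) xs)" and A: "A \<subseteq> {..<c}" and pl: "pos c A j < lv c"
  shows "snd (slice (phi a) xs) [pos c A j] = (if H (insert a (Vs xs) \<union> insert c A) = Some j then 1 else 0)"
proof -
  have fA: "finite A" using A finite_subset by blast
  have tD: "[pos c A j] \<in> dec_tuples (fst (slice (phi a) xs))"
    using pl lc by (simp add: dec_tuples_def)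
  have tD2: "xs @ [pos c A j] \<in> dec_tuples (lv a)" using dec_app[OF ok tD] by simp
  have nR: "\<not> set (xs @ [pos c A j]) \<subseteq> range lv" by simp
  have K: "KPc a (xs @ [pos c A j])"
    unfolding KPc_def using R len fA A below[OF ok lc] by auto
  have KS: "KPset a (xs @ [pos c A j]) = insert a (Vs xs) \<union> insert c A"
    unfolding KPset_def using fA by simp
  show ?thesis unfolding snd_slice[OF tD] snd_phi val_def
    using tD2 nR K KS fA by simp
qed

definition Psi0 :: "nat \<Rightarrow> nat \<Rightarrow> nat list \<Rightarrow> (nat \<Rightarrow> nat) \<Rightarrow> nat" where
  "Psi0 m c ws h = (if set ws \<subseteq> range lv then
      (if \<exists>j. h (pos c (Vs ws) j) = 1 then (SOME j. h (pos c (Vs ws) j) = 1) else 0)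
    else if ws \<noteq> [] \<and> set (butlast ws) \<subseteq> range lv \<and> odd (last ws) \<and> m + 1 + length ws \<le> k \<and>
      pA (last ws) \<subseteq> {..<pc (last ws)} \<and> (\<forall>v \<in> insert c (Vs (butlast ws)). pc (last ws) < v) \<and>
      h (pos c (Vs (butlast ws) \<union> insert (pc (last ws)) (pA (last ws))) (pj (last ws))) = 1
    then 1 else 0)"

definition Psi :: "nat \<Rightarrow> nat \<Rightarrow> nat list \<Rightarrow> vf \<Rightarrow> nat" where
  "Psi m c ws F = Psi0 m c ws (\<lambda>b. if b < lv c then snd F [b] else 0)"

lemma Psi_zero: "(\<forall>t. snd F t = 0) \<Longrightarrow> Psi m c ws F = 0"
  by (simp add: Psi_def Psi0_def)

lemma Psi_cong: "(\<forall>t \<in> dec_tuples (lv c). snd F t = snd G t) \<Longrightarrow> Psi m c ws F = Psi m c ws G"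
proof -
  assume a: "\<forall>t \<in> dec_tuples (lv c). snd F t = snd G t"
  have "(\<lambda>b. if b < lv c then snd F [b] else 0) = (\<lambda>b. if b < lv c then snd G [b] else 0)"
    using a by (auto simp: dec_tuples_def)
  then show ?thesis by (simp add: Psi_def)
qed

lemma ws_below:
  assumes "lv c # ws \<in> dec_tuples n"
  shows "Vs ws \<subseteq> {..<c}" "\<forall>x \<in> set ws. x < lv c"
proof -
  show "\<forall>x \<in> set ws. x < lv c" using assms by (simp add: dec_tuples_def)
  then show "Vs ws \<subseteq> {..<c}" by (auto simp: Vs_def)
qed

lemma Det_good:
  assumes ok: "slice_ok (phi a) xs" and R: "set xs \<subseteq> range lv" and len: "length xs < k"
    and lc: "lv c < fst (slice (phi a) xs)" and wD: "lv c # ws \<in> dec_tuples (fst (slice (phi a) xs))"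
  shows "snd (slice (phi a) xs) (lv c # ws) = Psi (length xs) c ws (slice (phi a) xs)"
proof -
  define F where "F = slice (phi a) xs"
  define h where "h = (\<lambda>b. if b < lv c then snd F [b] else 0)"
  have PsiF: "Psi (length xs) c ws F = Psi0 (length xs) c ws h" by (simp add: Psi_def h_def)
  have hbit: "h (pos c A j) = (if pos c A j < lv c \<and> H (insert a (Vs xs) \<union> insert c A) = Some j then 1 else 0)"
    if "A \<subseteq> {..<c}" for A j
    using bit[OF ok R len lc that] by (simp add: h_def F_def)
  have tD: "xs @ lv c # ws \<in> dec_tuples (lv a)" using dec_app[OF ok wD] by simp
  have sF: "snd F (lv c # ws) = val a (xs @ lv c # ws)" using snd_slice[OF wD] by (simp add: F_def)
  have wb: "Vs ws \<subseteq> {..<c}" "\<forall>x \<in> set ws. x < lv c" using ws_below[OF wD] by auto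
  have ca: "c < a" "\<forall>v\<in>Vs xs. c < v" using below[OF ok lc] by auto
  show ?thesis
  proof (cases "set ws \<subseteq> range lv")
    case True
    let ?S = "insert a (Vs xs) \<union> insert c (Vs ws)"
    have S: "insert a (Vs (xs @ lv c # ws)) = ?S" by auto
    have v: "val a (xs @ lv c # ws) = (case H ?S of Some j \<Rightarrow> j | None \<Rightarrow> 0)"
      using tD True R unfolding val_def S[symmetric] by simp
    have P: "Psi0 (length xs) c ws h = (if \<exists>j. h (pos c (Vs ws) j) = 1 then (SOME j. h (pos c (Vs ws) j) = 1) else 0)"
      using True by (simp add: Psi0_def)
    show ?thesis
    proof (cases "H ?S")
      case None
      then have "\<not> (\<exists>j. h (pos c (Vs ws) j) = 1)" using hbit[OF wb(1)] by simp
      then show ?thesis using sF v P PsiF None by (simp add: F_def)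
    next
      case (Some j0)
      have pl: "pos c (Vs ws) j0 < lv c" by (rule j_bound[OF Some len wb(1)])
      have h1: "h (pos c (Vs ws) j) = 1 \<longleftrightarrow> j = j0" for j
        using hbit[OF wb(1), of j] Some pl by auto
      then have "(SOME j. h (pos c (Vs ws) j) = 1) = j0" by simp
      then show ?thesis using sF v P PsiF Some h1 by (simp add: F_def)
    qed
  next
    case False
    then have wne: "ws \<noteq> []" by auto
    define b where "b = last ws"
    define bw where "bw = butlast ws"
    have wsplit: "ws = bw @ [b]" using wne by (simp add: b_def bw_def)
    have lt: "last (xs @ lv c # ws) = b" "butlast (xs @ lv c # ws) = xs @ lv c # bw"
      using wne by (simp_all add: b_def bw_def butlast_append)
    have nR: "\<not> set (xs @ lv c # ws) \<subseteq> range lv" using False by auto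
    have bwb: "Vs bw \<subseteq> {..<c}" using wb(1) unfolding wsplit by auto
    define C where "C = (set bw \<subseteq> range lv \<and> odd b \<and> length xs + 1 + length ws \<le> k \<and>
        pA b \<subseteq> {..<pc b} \<and> (\<forall>v \<in> insert c (Vs bw). pc b < v))"
    have KC: "KPc a (xs @ lv c # ws) \<longleftrightarrow> C"
      unfolding KPc_def C_def lt using R ca by (auto simp: less_trans)
    define A2 where "A2 = Vs bw \<union> insert (pc b) (pA b)"
    have KS: "KPset a (xs @ lv c # ws) = insert a (Vs xs) \<union> insert c A2"
      unfolding KPset_def lt A2_def by auto
    have P: "Psi0 (length xs) c ws h = (if C \<and> h (pos c A2 (pj b)) = 1 then 1 else 0)"
      using False wne unfolding Psi0_def C_def A2_def b_def bw_def by simp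
    have v: "val a (xs @ lv c # ws) = (if C \<and> H (insert a (Vs xs) \<union> insert c A2) = Some (pj b) then 1 else 0)"
      using tD KC KS R \<open>\<not> set ws \<subseteq> range lv\<close> unfolding val_def by (simp add: lt)
    show ?thesis
    proof (cases C)
      case True
      have A2c: "A2 \<subseteq> {..<c}" using True bwb unfolding C_def A2_def by auto
      have "h (pos c A2 (pj b)) = 1 \<longleftrightarrow> H (insert a (Vs xs) \<union> insert c A2) = Some (pj b)"
        using hbit[OF A2c, of "pj b"] j_bound[OF _ len A2c] by auto
      then show ?thesis using sF v P PsiF True by (simp add: F_def)
    next
      case False
      then show ?thesis using sF v P PsiF by (simp add: F_def)
    qed
  qed
qed

definition fam :: "nat \<Rightarrow> vf \<Rightarrow> bool" where
  "fam m F \<longleftrightarrow> (\<forall>t. t \<notin> dec_tuples (fst F) \<longrightarrow> snd F t = 0) \<and>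
     ((\<exists>a xs. F = slice (phi a) xs \<and> slice_ok (phi a) xs \<and> set xs \<subseteq> range lv \<and> length xs = m \<and> m < k)
      \<or> (\<forall>t. snd F t = 0))"

lemma Det_fam:
  assumes "fam m F" "lv c < fst F" "lv c # ws \<in> dec_tuples (fst F)"
  shows "snd F (lv c # ws) = Psi m c ws F"
  using assms Det_good Psi_zero unfolding fam_def by metis

lemma restr_eq: "restr F l = restr G l \<longleftrightarrow> (\<forall>t \<in> dec_tuples l. snd F t = snd G t)"
  unfolding restr_def by (auto simp: fun_eq_iff)

lemma restr_self: "(\<forall>t. t \<notin> dec_tuples (fst F) \<longrightarrow> snd F t = 0) \<Longrightarrow> restr F (fst F) = F"
  unfolding restr_def by (cases F) (auto simp: fun_eq_iff)

lemma dec_Suc: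
  assumes "t \<in> dec_tuples (Suc l)" "t \<notin> dec_tuples l"
  shows "\<exists>ws. t = l # ws"
proof -
  obtain x ws where t: "t = x # ws" using assms(1) by (cases t) (auto simp: dec_tuples_def)
  have "x \<le> l" "\<forall>y\<in>set ws. y < x" using assms(1) t by (auto simp: dec_tuples_def)
  moreover have "\<not> x < l"
  proof
    assume "x < l"
    then have "t \<in> dec_tuples l" using assms(1) t \<open>\<forall>y\<in>set ws. y < x\<close> by (auto simp: dec_tuples_def)
    then show False using assms(2) by simp
  qed
  ultimately show ?thesis using t by auto
qed

lemma meet_notin:
  assumes F: "fam m F" and G: "fam m G" and n1: "\<not> vf_le F G" and n2: "\<not> vf_le G F"
  shows "meet_level F G \<notin> range lv"
proof
  assume "meet_level F G \<in> range lv"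
  then obtain c where Mc: "meet_level F G = lv c" by auto
  define Q where "Q = (\<lambda>l. l \<le> fst F \<and> l \<le> fst G \<and> restr F l = restr G l)"
  have Q0: "Q 0" unfolding Q_def restr_eq by (simp add: dec_tuples_def)
  have Qb: "\<And>y. Q y \<Longrightarrow> y \<le> fst F" unfolding Q_def by simp
  have QM: "Q (lv c)" using GreatestI_nat[of Q 0 "fst F", OF Q0 Qb] Mc unfolding meet_level_def Q_def by simp
  have domF: "\<forall>t. t \<notin> dec_tuples (fst F) \<longrightarrow> snd F t = 0" using F by (simp add: fam_def)
  have domG: "\<forall>t. t \<notin> dec_tuples (fst G) \<longrightarrow> snd G t = 0" using G by (simp add: fam_def)
  have lF: "lv c < fst F"
  proof (rule ccontr)
    assume "\<not> lv c < fst F"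
    then have e: "lv c = fst F" using QM unfolding Q_def by simp
    then have "restr G (fst F) = F" using QM restr_self[OF domF] unfolding Q_def by simp
    then have "vf_le F G" using QM e unfolding Q_def vf_le_def by simp
    then show False using n1 by simp
  qed
  have lG: "lv c < fst G"
  proof (rule ccontr)
    assume "\<not> lv c < fst G"
    then have e: "lv c = fst G" using QM unfolding Q_def by simp
    then have "restr F (fst G) = G" using QM restr_self[OF domG] unfolding Q_def by simp
    then have "vf_le G F" using QM e unfolding Q_def vf_le_def by simp
    then show False using n2 by simp
  qed
  have agree: "\<forall>t \<in> dec_tuples (lv c). snd F t = snd G t" using QM unfolding Q_def restr_eq by simp
  have "Q (Suc (lv c))"
    unfolding Q_def restr_eq
  proof (intro conjI ballI)
    show "Suc (lv c) \<le> fst F" "Suc (lv c) \<le> fst G" using lF lG by auto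
    fix t assume tS: "t \<in> dec_tuples (Suc (lv c))"
    show "snd F t = snd G t"
    proof (cases "t \<in> dec_tuples (lv c)")
      case True then show ?thesis using agree by simp
    next
      case False
      then obtain ws where t: "t = lv c # ws" using dec_Suc[OF tS] by auto
      have "lv c # ws \<in> dec_tuples (fst F)" "lv c # ws \<in> dec_tuples (fst G)"
        using tS lF lG unfolding t dec_tuples_def by auto
      then show ?thesis unfolding t
        using Det_fam[OF F lF] Det_fam[OF G lG] Psi_cong[OF agree] by metis
    qed
  qed
  then have "Suc (lv c) \<le> lv c" using Greatest_le_nat[of Q "Suc (lv c)" "fst F", OF _ Qb] Mc
    unfolding meet_level_def Q_def by simp
  then show False by simp
qed

lemma zero_slice:
  assumes "slice_ok (phi a) xs" "\<not> set xs \<subseteq> range lv"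
  shows "snd (slice (phi a) xs) t = 0"
proof -
  have ne: "xs \<noteq> []" using assms(2) by auto
  show ?thesis
  proof (cases "t \<in> dec_tuples (last xs)")
    case False then show ?thesis using ne by (simp add: slice_def)
  next
    case True
    then have tne: "t \<noteq> []" by (simp add: dec_tuples_def)
    have "\<not> KPc a (xs @ t)" using assms(2) tne by (auto simp: KPc_def butlast_append)
    then show ?thesis using ne True assms(2) by (simp add: slice_def val_def)
  qed
qed

lemma dom_slice:
  assumes "\<forall>t. t \<notin> dec_tuples (fst f) \<longrightarrow> snd f t = 0"
  shows "\<forall>t. t \<notin> dec_tuples (fst (slice f xs)) \<longrightarrow> snd (slice f xs) t = 0"
  using assms by (auto simp: slice_def)

lemma fam_phi:
  assumes "slice_ok (phi a) xs" "length xs = m" "m < k"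
  shows "fam m (slice (phi a) xs)"
proof -
  have d: "\<forall>t. t \<notin> dec_tuples (fst (phi a)) \<longrightarrow> snd (phi a) t = 0" by (simp add: val_def)
  show ?thesis unfolding fam_def using dom_slice[OF d] zero_slice[OF assms(1)] assms by blast
qed

lemma fam_zero:
  assumes "g \<in> Tlev nrel 0" "const_zero g"
  shows "fam m (slice g ys)"
proof -
  have d: "\<forall>t. t \<notin> dec_tuples (fst g) \<longrightarrow> snd g t = 0" using assms(1) by (simp add: Tlev_def valfun_def)
  have "\<forall>t. snd (slice g ys) t = 0" using assms(2) by (simp add: slice_def const_zero_def)
  then show ?thesis unfolding fam_def using dom_slice[OF d] by blast
qed

lemma env: "k_enveloping nrel H k phi"
proof -
  have big: "\<forall>f\<in>range phi. \<forall>m<k. \<forall>xs. length xs = m \<and> slice_ok f xs \<longrightarrow>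
          (\<not> const_zero (slice f xs) \<longrightarrow> set xs \<subseteq> range lv) \<and>
          (\<forall>g ys. (g \<in> range phi \<or> (g \<in> Tlev nrel 0 \<and> const_zero g)) \<longrightarrow>
                  length ys = m \<longrightarrow> slice_ok g ys \<longrightarrow>
                  \<not> vf_le (slice f xs) (slice g ys) \<longrightarrow> \<not> vf_le (slice g ys) (slice f xs) \<longrightarrow>
                  meet_level (slice f xs) (slice g ys) \<in> - range lv)"
  proof (intro ballI allI impI conjI)
    fix f m xs assume f: "f \<in> range phi" and m: "m < k" and x: "length xs = m \<and> slice_ok f xs"
    obtain a where a: "f = phi a" using f by auto
    show "set xs \<subseteq> range lv" if nz: "\<not> const_zero (slice f xs)"
    proof (rule ccontr)
      assume "\<not> set xs \<subseteq> range lv"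
      then have "const_zero (slice f xs)" using zero_slice[of a xs] x a by (simp add: const_zero_def)
      then show False using nz by simp
    qed
    fix g ys
    assume g: "g \<in> range phi \<or> (g \<in> Tlev nrel 0 \<and> const_zero g)" and ly: "length ys = m"
      and oky: "slice_ok g ys" and n1: "\<not> vf_le (slice f xs) (slice g ys)"
      and n2: "\<not> vf_le (slice g ys) (slice f xs)"
    have Ff: "fam m (slice f xs)" using fam_phi[of a xs m] x a m by simp
    have Gf: "fam m (slice g ys)"
      using g fam_zero fam_phi[OF _ ly m] oky by blast
    show "meet_level (slice f xs) (slice g ys) \<in> - range lv"
      using meet_notin[OF Ff Gf n1 n2] by simp
  qed
  show ?thesis unfolding k_enveloping_def
    apply (rule conjI[OF emb], rule exI[of _ "range lv"], rule exI[of _ "- range lv"])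
    apply (rule conjI, simp, rule conjI, simp)
    by (rule big)
qed

end

theorem lemma4p4:
  fixes nrel :: "nat \<Rightarrow> nat" and H :: "nat set \<Rightarrow> nat option"
  assumes "nrel 0 = 0" and "nrel 1 = 0"
    and "universal_Lhyp nrel H"
  shows "\<forall>k::nat. \<exists>\<phi>. k_enveloping nrel H k \<phi>"
proof
  fix k :: nat
  interpret cons nrel H k using assms(3) by unfold_locales (simp add: universal_Lhyp_def)
  show "\<exists>\<phi>. k_enveloping nrel H k \<phi>" using env by blast
qed

end
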